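(* Let $\mathbb{K}$ be a field and $\alpha_1,\dots,\alpha_n\in\mathbb{K}^*$. If $n$ is even, then $X_{\mathbb{A}_n}(\alpha_1,\dots,\alpha_n)\simeq X_{\mathbb{A}_n}(1,1,\dots,1)$. If $n$ is odd, then $X_{\mathbb{A}_n}(\alpha_1,\dots,\alpha_n)\simeq X_{\mathbb{A}_n}(\alpha,1,\dots,1)$ for some $\alpha\in\mathbb{K}^*$ depending only on the $\alpha_i$ with $i$ odd.
   Context: $X_{\mathbb{A}_n}(\alpha_1,\dots,\alpha_n)$ is the affine variety over $\mathbb{K}$ in the variables $x_1,\dots,x_n,x'_1,\dots,x'_n$ defined by $x_1x'_1=1+\alpha_1x_2$, $x_ix'_i=1+\alpha_i x_{i-1}x_{i+1}$ for $2\le i\le n-1$, and $x_nx'_n=1+\alpha_nx_{n-1}$ (for $n=1$: $x_1x'_1=1+\alpha_1$). *)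

theory Defs
  imports Main "HOL-Library.Poly_Mapping"
begin

(* Multivariate polynomials over 'k in variables indexed by nat:
  a monomial is a finitely supported exponent vector (nat =>0 nat),
  a polynomial a finitely supported coefficient function on monomials.*)

type_synonym 'k mpoly = "(nat \<Rightarrow>\<^sub>0 nat) \<Rightarrow>\<^sub>0 'k"

definition Var :: "nat \<Rightarrow> 'k::comm_ring_1 mpoly" where
  "Var v = Poly_Mapping.single (Poly_Mapping.single v 1) 1"

definition Const :: "'k::comm_ring_1 \<Rightarrow> 'k mpoly" where
  "Const c = Poly_Mapping.single 0 c"

definition vars :: "'k::comm_ring_1 mpoly \<Rightarrow> nat set" where
  "vars p = \<Union> (Poly_Mapping.keys ` Poly_Mapping.keys p)"

definition subst :: "'k::comm_ring_1 mpoly \<Rightarrow> (nat \<Rightarrow> 'k mpoly) \<Rightarrow> 'k mpoly" where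
  "subst p \<sigma> = (\<Sum>m\<in>Poly_Mapping.keys p.
       Const (Poly_Mapping.lookup p m) * (\<Prod>v\<in>Poly_Mapping.keys m. \<sigma> v ^ Poly_Mapping.lookup m v))"

definition in_ideal :: "'k::comm_ring_1 mpoly set \<Rightarrow> 'k mpoly \<Rightarrow> bool" where
  "in_ideal G p \<longleftrightarrow> (\<exists>c. p = (\<Sum>g\<in>G. c g * g))"

(* Isomorphism of affine varieties = K-algebra isomorphism of coordinate rings
  K[x_v : v \<in> V]/(G) and K[x_w : w \<in> W]/(H): mutually inverse (modulo the ideals)
  polynomial maps sending ideal to ideal.*)
definition variety_iso :: "nat set \<Rightarrow> 'k::comm_ring_1 mpoly set \<Rightarrow> nat set \<Rightarrow> 'k mpoly set \<Rightarrow> bool" where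
  "variety_iso V G W H \<longleftrightarrow>
     (\<exists>\<phi> \<psi>. (\<forall>v\<in>V. vars (\<phi> v) \<subseteq> W) \<and> (\<forall>w\<in>W. vars (\<psi> w) \<subseteq> V)
        \<and> (\<forall>g\<in>G. in_ideal H (subst g \<phi>)) \<and> (\<forall>h\<in>H. in_ideal G (subst h \<psi>))
        \<and> (\<forall>v\<in>V. in_ideal G (subst (\<phi> v) \<psi> - Var v))
        \<and> (\<forall>w\<in>W. in_ideal H (subst (\<psi> w) \<phi> - Var w)))"

(* X_{A_n}(\<alpha>): variables x_i = Var i and x'_i = Var (n+i) for 1 \<le> i \<le> n;
  equations x_i x'_i = 1 + \<alpha>_i x_{i-1} x_{i+1}, where missing neighbours
  (x_0, x_{n+1}) are replaced by 1.*)
definition nbr :: "nat \<Rightarrow> nat \<Rightarrow> 'k::comm_ring_1 mpoly" where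
  "nbr n i = (if 1 < i then Var (i - 1) else 1) * (if i < n then Var (i + 1) else 1)"

definition XA_vars :: "nat \<Rightarrow> nat set" where
  "XA_vars n = {1..2*n}"

definition XA_eqs :: "nat \<Rightarrow> (nat \<Rightarrow> 'k::comm_ring_1) \<Rightarrow> 'k mpoly set" where
  "XA_eqs n \<alpha> = (\<lambda>i. Var i * Var (n + i) - 1 - Const (\<alpha> i) * nbr n i) ` {1..n}"

definition XA_iso :: "nat \<Rightarrow> (nat \<Rightarrow> 'k::comm_ring_1) \<Rightarrow> (nat \<Rightarrow> 'k) \<Rightarrow> bool" where
  "XA_iso n \<alpha> \<beta> = variety_iso (XA_vars n) (XA_eqs n \<alpha>) (XA_vars n) (XA_eqs n \<beta>)"

end

theory Submission
  imports Defs
begin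

definition E :: "(nat \<Rightarrow> 'k::comm_ring_1 mpoly) \<Rightarrow> (nat \<Rightarrow>\<^sub>0 nat) \<Rightarrow> 'k mpoly" where
  "E \<sigma> m = (\<Prod>v\<in>Poly_Mapping.keys m. \<sigma> v ^ Poly_Mapping.lookup m v)"

lemma Const_0[simp]: "Const 0 = 0" by (simp add: Const_def)
lemma Const_1[simp]: "Const 1 = 1" by (simp add: Const_def)
lemma Const_add: "Const (a + b) = Const a + Const b" by (simp add: Const_def single_add)
lemma Const_diff: "Const (a - b) = Const a - Const b" by (simp add: Const_def single_diff)
lemma Const_mult: "Const (a * b) = Const a * Const b" by (simp add: Const_def mult_single)

lemma E_superset:
  assumes "finite S" "Poly_Mapping.keys m \<subseteq> S"
  shows "E \<sigma> m = (\<Prod>v\<in>S. \<sigma> v ^ Poly_Mapping.lookup m v)"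
  unfolding E_def
  by (rule prod.mono_neutral_left[OF assms]) (auto simp: in_keys_iff)

lemma E_add: "E \<sigma> (m1 + m2) = E \<sigma> m1 * E \<sigma> m2"
proof -
  let ?S = "Poly_Mapping.keys m1 \<union> Poly_Mapping.keys m2"
  have f: "finite ?S" by simp
  have "E \<sigma> (m1 + m2) = (\<Prod>v\<in>?S. \<sigma> v ^ Poly_Mapping.lookup (m1+m2) v)"
    using E_superset[OF f keys_add] .
  also have "\<dots> = (\<Prod>v\<in>?S. \<sigma> v ^ Poly_Mapping.lookup m1 v * \<sigma> v ^ Poly_Mapping.lookup m2 v)"
    by (simp add: lookup_add power_add)
  also have "\<dots> = E \<sigma> m1 * E \<sigma> m2"
    by (simp add: prod.distrib E_superset[OF f])
  finally show ?thesis .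
qed

lemma E_single: "E \<sigma> (Poly_Mapping.single v 1) = \<sigma> v"
  by (simp add: E_def)

lemma E_single'[simp]: "E \<sigma> (Poly_Mapping.single v (Suc 0)) = \<sigma> v"
  using E_single by (metis One_nat_def)

lemma E_zero: "E \<sigma> 0 = 1"
  by (simp add: E_def)

lemma subst_superset:
  assumes "finite S" "Poly_Mapping.keys p \<subseteq> S"
  shows "subst p \<sigma> = (\<Sum>m\<in>S. Const (Poly_Mapping.lookup p m) * E \<sigma> m)"
  unfolding subst_def E_def
  by (rule sum.mono_neutral_left[OF assms]) (auto simp: in_keys_iff)

lemma subst_add: "subst (p + q) \<sigma> = subst p \<sigma> + subst q \<sigma>"
proof -
  let ?S = "Poly_Mapping.keys p \<union> Poly_Mapping.keys q"
  have f: "finite ?S" by simp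
  show ?thesis
    by (simp add: subst_superset[OF f keys_add] subst_superset[OF f] lookup_add Const_add
        distrib_right sum.distrib)
qed

lemma subst_diff: "subst (p - q) \<sigma> = subst p \<sigma> - subst q \<sigma>"
proof -
  let ?S = "Poly_Mapping.keys p \<union> Poly_Mapping.keys q"
  have f: "finite ?S" by simp
  show ?thesis
    by (simp add: subst_superset[OF f keys_diff] subst_superset[OF f] lookup_minus Const_diff
        left_diff_distrib sum_subtractf)
qed

lemma subst_single: "subst (Poly_Mapping.single m a) \<sigma> = Const a * E \<sigma> m"
  by (simp add: subst_superset[of "{m}"] Const_def)

lemma Var_mult: "Var a * Var b = Poly_Mapping.single (Poly_Mapping.single a 1 + Poly_Mapping.single b 1) 1"
  by (simp add: Var_def mult_single)

lemma subst_Var: "subst (Var a) \<sigma> = \<sigma> a"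
  by (simp add: Var_def subst_single E_single)

lemma subst_1: "subst 1 \<sigma> = 1"
  using subst_single[of 0 1 \<sigma>] by (simp add: E_zero)

lemma subst_VV: "subst (Var a * Var b) \<sigma> = \<sigma> a * \<sigma> b"
  by (simp add: Var_mult subst_single E_add E_single)

lemma subst_Const_mult: "subst (Const c * Poly_Mapping.single m 1) \<sigma> = Const c * E \<sigma> m"
  by (simp add: Const_def mult_single subst_single)

lemma nbr_single: "nbr n i = Poly_Mapping.single
   ((if 1 < i then Poly_Mapping.single (i-1) 1 else 0) + (if i < n then Poly_Mapping.single (i+1) 1 else 0)) 1"
  by (simp add: nbr_def Var_def mult_single)

lemma subst_eq: "subst (Var i * Var (n + i) - 1 - Const a * nbr n i) \<sigma> =
   \<sigma> i * \<sigma> (n+i) - 1 - Const a * ((if 1 < i then \<sigma> (i-1) else 1) * (if i < n then \<sigma> (i+1) else 1))"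
  by (simp add: subst_diff subst_VV subst_1 nbr_single subst_Const_mult E_add E_single E_zero)

lemma vars_scale: "vars (Const c * Var v) \<subseteq> {v}"
  by (simp add: vars_def Const_def Var_def mult_single)

lemma in_ideal_mem: "finite H \<Longrightarrow> h \<in> H \<Longrightarrow> in_ideal H h"
proof -
  assume f: "finite H" and h: "h \<in> H"
  have "(\<Sum>g\<in>H. (if g = h then 1 else 0) * g) = (\<Sum>g\<in>H. if g = h then g else 0)"
    by (rule sum.cong) auto
  also have "\<dots> = h" using f h by simp
  finally show ?thesis unfolding in_ideal_def by (intro exI[of _ "\<lambda>g. if g = h then 1 else 0"]) simp
qed

lemma in_ideal_0: "in_ideal H 0"
  unfolding in_ideal_def by (rule exI[of _ "\<lambda>g. 0"]) simp

lemma subst_scale_Var: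
  assumes "(c::'k::field) \<noteq> 0"
  shows "subst (Const c * Var v) (\<lambda>w. Const (d w) * Var w) = Const (c * d v) * Var v"
proof -
  have "Const c * Var v = Poly_Mapping.single (Poly_Mapping.single v 1) c"
    by (simp add: Const_def Var_def mult_single)
  then show ?thesis by (simp add: subst_single E_single Const_mult)
qed

lemma subst_scale_eq:
  fixes c :: "nat \<Rightarrow> 'k::field"
  assumes "c i * c (n+i) = 1"
  shows "subst (Var i * Var (n + i) - 1 - Const a * nbr n i) (\<lambda>v. Const (c v) * Var v)
     = Var i * Var (n + i) - 1 - Const (a * ((if 1<i then c (i-1) else 1) * (if i<n then c (i+1) else 1))) * nbr n i"
proof -
  have 1: "Const (c i) * Var i * (Const (c (n + i)) * Var (n + i)) = Var i * Var (n+i)"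
  proof -
    have "Const (c i) * Var i * (Const (c (n + i)) * Var (n + i)) = Const (c i * c (n+i)) * (Var i * Var (n+i))"
      by (simp add: Const_mult ac_simps)
    then show ?thesis using assms by simp
  qed
  show ?thesis
    unfolding subst_eq 1 by (simp add: nbr_def Const_mult ac_simps)
qed

lemma scaling_iso:
  fixes c :: "nat \<Rightarrow> 'k::field"
  assumes c0: "\<forall>v. c v \<noteq> 0"
    and cc: "\<forall>i\<in>{1..n}. c i * c (n+i) = 1"
    and beta: "\<forall>i\<in>{1..n}. \<beta> i = \<alpha> i * ((if 1<i then c(i-1) else 1) * (if i<n then c(i+1) else 1))"
  shows "XA_iso n \<alpha> \<beta>"
proof -
  define d where "d v = inverse (c v)" for v
  define \<phi> where "\<phi> = (\<lambda>v. Const (c v) * (Var v :: 'k mpoly))"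
  define \<psi> where "\<psi> = (\<lambda>v. Const (d v) * (Var v :: 'k mpoly))"
  have d0: "\<forall>v. d v \<noteq> 0" using c0 by (simp add: d_def)
  have dd: "\<forall>i\<in>{1..n}. d i * d (n+i) = 1" using cc
    by (simp add: d_def flip: inverse_mult_distrib)
  have alpha: "\<forall>i\<in>{1..n}. \<alpha> i = \<beta> i * ((if 1<i then d(i-1) else 1) * (if i<n then d(i+1) else 1))"
    using beta c0 by (auto simp: d_def field_simps)
  have fin: "finite (XA_eqs n a)" for a :: "nat \<Rightarrow> 'k" by (simp add: XA_eqs_def)
  show ?thesis
    unfolding XA_iso_def variety_iso_def
  proof (rule exI[of _ \<phi>], rule exI[of _ \<psi>], intro conjI ballI)
    fix v assume "v \<in> XA_vars n"
    then show "vars (\<phi> v) \<subseteq> XA_vars n"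
      using vars_scale unfolding \<phi>_def by blast
  next
    fix v assume "v \<in> XA_vars n"
    then show "vars (\<psi> v) \<subseteq> XA_vars n"
      using vars_scale unfolding \<psi>_def by blast
  next
    fix g assume "g \<in> XA_eqs n \<alpha>"
    then obtain i where i: "i \<in> {1..n}" and g: "g = Var i * Var (n + i) - 1 - Const (\<alpha> i) * nbr n i"
      by (auto simp: XA_eqs_def)
    have "subst g \<phi> = Var i * Var (n + i) - 1 - Const (\<beta> i) * nbr n i"
      unfolding g \<phi>_def using subst_scale_eq[of c i n] cc beta i by simp
    also have "\<dots> \<in> XA_eqs n \<beta>" using i by (auto simp: XA_eqs_def)
    finally show "in_ideal (XA_eqs n \<beta>) (subst g \<phi>)" by (rule in_ideal_mem[OF fin])
  next
    fix g assume "g \<in> XA_eqs n \<beta>"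
    then obtain i where i: "i \<in> {1..n}" and g: "g = Var i * Var (n + i) - 1 - Const (\<beta> i) * nbr n i"
      by (auto simp: XA_eqs_def)
    have "subst g \<psi> = Var i * Var (n + i) - 1 - Const (\<alpha> i) * nbr n i"
      unfolding g \<psi>_def using subst_scale_eq[of d i n] dd alpha i by simp
    also have "\<dots> \<in> XA_eqs n \<alpha>" using i by (auto simp: XA_eqs_def)
    finally show "in_ideal (XA_eqs n \<alpha>) (subst g \<psi>)" by (rule in_ideal_mem[OF fin])
  next
    fix v assume "v \<in> XA_vars n"
    show "in_ideal (XA_eqs n \<alpha>) (subst (\<phi> v) \<psi> - Var v)"
      using c0 by (simp add: \<phi>_def \<psi>_def subst_scale_Var d_def in_ideal_0)
  next
    fix v assume "v \<in> XA_vars n"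
    show "in_ideal (XA_eqs n \<beta>) (subst (\<psi> v) \<phi> - Var v)"
      using d0 by (simp add: \<phi>_def \<psi>_def subst_scale_Var d_def in_ideal_0 c0)
  qed
qed

definition nz :: "(nat \<Rightarrow> 'k::field) \<Rightarrow> nat \<Rightarrow> 'k" where
  "nz \<alpha> i = (if \<alpha> i = 0 then 1 else \<alpha> i)"

lemma nz_nonzero: "nz \<alpha> i \<noteq> 0" by (simp add: nz_def)

fun uu :: "(nat \<Rightarrow> 'k::field) \<Rightarrow> nat \<Rightarrow> 'k" where
  "uu a 0 = 1" | "uu a (Suc 0) = 1" | "uu a (Suc (Suc k)) = inverse (a (Suc k) * uu a k)"

fun dd :: "(nat \<Rightarrow> 'k::field) \<Rightarrow> nat \<Rightarrow> nat \<Rightarrow> 'k" where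
  "dd a n 0 = 1" | "dd a n (Suc 0) = 1" | "dd a n (Suc (Suc k)) = inverse (a (n - k) * dd a n k)"

lemma uu_nz: "uu (nz \<alpha>) k \<noteq> 0"
  by (induction "nz \<alpha>" k rule: uu.induct) (auto simp: nz_nonzero)

lemma dd_nz: "dd (nz \<alpha>) n k \<noteq> 0"
  by (induction "nz \<alpha>" n k rule: dd.induct) (auto simp: nz_nonzero)

definition lam :: "(nat \<Rightarrow> 'k::field) \<Rightarrow> nat \<Rightarrow> nat \<Rightarrow> 'k" where
  "lam \<alpha> n j = (if odd (n + j) then dd (nz \<alpha>) n (n + 1 - j) else uu (nz \<alpha>) j)"

lemma lam_nz: "lam \<alpha> n j \<noteq> 0"
  by (simp add: lam_def uu_nz dd_nz)

lemma lam_eqn: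
  assumes i: "i \<in> {1..n}" and ex: "\<not> (i = 1 \<and> odd n)"
  shows "nz \<alpha> i * ((if 1<i then lam \<alpha> n (i-1) else 1) * (if i<n then lam \<alpha> n (i+1) else 1)) = 1"
proof -
  have l: "(if 1<i then lam \<alpha> n (i-1) else 1) = lam \<alpha> n (i-1)"
    using i ex by (auto simp: lam_def)
  have r: "(if i<n then lam \<alpha> n (i+1) else 1) = lam \<alpha> n (i+1)"
  proof (cases "i < n")
    case False
    then have "i = n" using i by auto
    then show ?thesis by (simp add: lam_def)
  qed simp
  show ?thesis
  proof (cases "odd (n + i)")
    case True
    have "lam \<alpha> n (i-1) = uu (nz \<alpha>) (i-1)" using True i by (auto simp: lam_def)
    moreover have "lam \<alpha> n (i+1) = inverse (nz \<alpha> i * uu (nz \<alpha>) (i-1))"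
    proof -
      obtain j where j: "i = Suc j" using i by (cases i) auto
      show ?thesis using True unfolding j by (simp add: lam_def)
    qed
    ultimately show ?thesis unfolding l r using uu_nz[of \<alpha> "i-1"] nz_nonzero[of \<alpha> i]
      by (simp add: field_simps)
  next
    case False
    have "lam \<alpha> n (i-1) = dd (nz \<alpha>) n (Suc (Suc (n-i)))" using False i
      by (auto simp: lam_def Suc_diff_le)
    moreover have "lam \<alpha> n (i+1) = dd (nz \<alpha>) n (n-i)" using False i by (auto simp: lam_def)
    moreover have "n - (n - i) = i" using i by auto
    ultimately show ?thesis unfolding l r using dd_nz[of \<alpha> n "n-i"] nz_nonzero[of \<alpha> i]
      by (simp add: field_simps)
  qed
qed

definition cc :: "(nat \<Rightarrow> 'k::field) \<Rightarrow> nat \<Rightarrow> nat \<Rightarrow> 'k" where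
  "cc \<alpha> n j = (if j \<in> {1..n} then lam \<alpha> n j else if j \<in> {n+1..2*n} then inverse (lam \<alpha> n (j - n)) else 1)"

lemma cc_facts:
  "\<forall>v. cc \<alpha> n v \<noteq> 0"
  "\<forall>i\<in>{1..n}. cc \<alpha> n i * cc \<alpha> n (n+i) = 1"
  "\<forall>i\<in>{1..n}. (if 1<i then cc \<alpha> n (i-1) else 1) * (if i<n then cc \<alpha> n (i+1) else 1)
      = (if 1<i then lam \<alpha> n (i-1) else 1) * (if i<n then lam \<alpha> n (i+1) else 1)"
  using lam_nz[of \<alpha> n] by (auto simp: cc_def)

lemma dd_odd_only:
  assumes "odd n" "\<forall>j. odd j \<and> j \<in> {1..n} \<longrightarrow> \<alpha>' j = \<alpha> j"
  shows "even k \<Longrightarrow> k < n \<Longrightarrow> dd (nz \<alpha>') n k = dd (nz \<alpha>) n k"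
proof (induction k rule: less_induct)
  case (less k)
  show ?case
  proof (cases k)
    case (Suc j)
    show ?thesis
    proof (cases j)
      case (Suc m)
      have k: "k = Suc (Suc m)" using Suc \<open>k = Suc j\<close> by simp
      have m1: "even m" using less.prems(1) k by simp
      have m2: "m < n" using less.prems(2) k by simp
      note m = m1 m2
      have od: "odd (n - m)"
      proof
        assume "even (n - m)"
        then have "even ((n - m) + m)" using m1 by (rule dvd_add)
        moreover have "(n - m) + m = n" using m2 by (rule le_add_diff_inverse2[OF less_imp_le])
        ultimately have "even n" by (rule back_subst)
        with assms(1) show False by (rule notE)
      qed
      have mem: "n - m \<in> {1..n}" using m2 by simp
      have "\<alpha>' (n - m) = \<alpha> (n - m)" using assms(2)[rule_format, OF conjI[OF od mem]] .
      then have "nz \<alpha>' (n - m) = nz \<alpha> (n - m)" by (simp add: nz_def)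
      moreover have "dd (nz \<alpha>') n m = dd (nz \<alpha>) n m" using less.IH[of m] m1 m2 k by simp
      ultimately show ?thesis unfolding k by simp
    qed (use \<open>k = Suc j\<close> in simp)
  qed simp
qed

theorem mainTheorem5:
  fixes n :: nat
  assumes "n \<ge> 1"
  shows "(even n \<longrightarrow> (\<forall>\<alpha> :: nat \<Rightarrow> 'k::field. (\<forall>i\<in>{1..n}. \<alpha> i \<noteq> 0) \<longrightarrow>
            XA_iso n \<alpha> (\<lambda>_. 1)))
       \<and> (odd n \<longrightarrow> (\<exists>F :: (nat \<Rightarrow> 'k) \<Rightarrow> 'k. \<forall>\<alpha>. (\<forall>i\<in>{1..n}. \<alpha> i \<noteq> 0) \<longrightarrow>
            (let a = F (\<lambda>i. if i \<in> {1..n} \<and> odd i then \<alpha> i else 0)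
             in a \<noteq> 0 \<and> XA_iso n \<alpha> (\<lambda>i. if i = 1 then a else 1))))"
proof (intro conjI impI allI)
  fix \<alpha> :: "nat \<Rightarrow> 'k"
  assume ev: "even n" and a0: "\<forall>i\<in>{1..n}. \<alpha> i \<noteq> 0"
  show "XA_iso n \<alpha> (\<lambda>_. 1)"
  proof (rule scaling_iso[OF cc_facts(1,2)])
    show "\<forall>i\<in>{1..n}. (1::'k) = \<alpha> i * ((if 1<i then cc \<alpha> n (i-1) else 1) * (if i<n then cc \<alpha> n (i+1) else 1))"
    proof
      fix i assume i: "i \<in> {1..n}"
      have "nz \<alpha> i = \<alpha> i" using a0 i by (simp add: nz_def)
      then show "(1::'k) = \<alpha> i * ((if 1<i then cc \<alpha> n (i-1) else 1) * (if i<n then cc \<alpha> n (i+1) else 1))"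
        using lam_eqn[OF i, of \<alpha>] ev cc_facts(3)[of n \<alpha>] i by simp
    qed
  qed
next
  assume od: "odd n"
  define F where "F = (\<lambda>\<alpha>' :: nat \<Rightarrow> 'k. \<alpha>' 1 * (if 1 < n then dd (nz \<alpha>') n (n - 1) else 1))"
  show "\<exists>F :: (nat \<Rightarrow> 'k) \<Rightarrow> 'k. \<forall>\<alpha>. (\<forall>i\<in>{1..n}. \<alpha> i \<noteq> 0) \<longrightarrow>
            (let a = F (\<lambda>i. if i \<in> {1..n} \<and> odd i then \<alpha> i else 0)
             in a \<noteq> 0 \<and> XA_iso n \<alpha> (\<lambda>i. if i = 1 then a else 1))"
  proof (intro exI[of _ F] allI impI)
    fix \<alpha> :: "nat \<Rightarrow> 'k"
    assume a0: "\<forall>i\<in>{1..n}. \<alpha> i \<noteq> 0"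
    define \<alpha>' where "\<alpha>' = (\<lambda>i. if i \<in> {1..n} \<and> odd i then \<alpha> i else 0)"
    have a1: "\<alpha>' 1 = \<alpha> 1" using assms by (simp add: \<alpha>'_def)
    have ddeq: "dd (nz \<alpha>') n (n - 1) = dd (nz \<alpha>) n (n - 1)"
      by (rule dd_odd_only[OF od]) (use od assms in \<open>auto simp: \<alpha>'_def\<close>)
    have Fa: "F \<alpha>' = \<alpha> 1 * (if 1 < n then dd (nz \<alpha>) n (n - 1) else 1)"
      by (simp add: F_def a1[simplified] ddeq[simplified])
    have "\<alpha> 1 \<noteq> 0" using a0 assms by auto
    then have nz0: "F \<alpha>' \<noteq> 0" unfolding Fa using dd_nz[of \<alpha> n "n-1"] by simp
    have "XA_iso n \<alpha> (\<lambda>i. if i = 1 then F \<alpha>' else 1)"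
    proof (rule scaling_iso[OF cc_facts(1,2)])
      show "\<forall>i\<in>{1..n}. (if i = 1 then F \<alpha>' else 1) = \<alpha> i * ((if 1<i then cc \<alpha> n (i-1) else 1) * (if i<n then cc \<alpha> n (i+1) else 1))"
      proof
        fix i assume i: "i \<in> {1..n}"
        have nzi: "nz \<alpha> i = \<alpha> i" using a0 i by (simp add: nz_def)
        show "(if i = 1 then F \<alpha>' else 1) = \<alpha> i * ((if 1<i then cc \<alpha> n (i-1) else 1) * (if i<n then cc \<alpha> n (i+1) else 1))"
        proof (cases "i = 1")
          case True
          have "lam \<alpha> n 2 = dd (nz \<alpha>) n (n - 1)" using od by (simp add: lam_def)
          then show ?thesis using True i Fa od by (auto simp: cc_def numeral_2_eq_2)
        next
          case False
          have e: "(if 1<i then cc \<alpha> n (i-1) else 1) * (if i<n then cc \<alpha> n (i+1) else 1)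
      = (if 1<i then lam \<alpha> n (i-1) else 1) * (if i<n then lam \<alpha> n (i+1) else 1)"
            using cc_facts(3)[rule_format, OF i] .
          have "nz \<alpha> i * ((if 1<i then lam \<alpha> n (i-1) else 1) * (if i<n then lam \<alpha> n (i+1) else 1)) = 1"
            using lam_eqn[OF i, of \<alpha>] False by blast
          then show ?thesis unfolding e nzi using False by simp
        qed
      qed
    qed
    then show "let a = F \<alpha>' in a \<noteq> 0 \<and> XA_iso n \<alpha> (\<lambda>i. if i = 1 then a else 1)"
      using nz0 by simp
  qed
qed

end
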